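(* Let $\Omega\subseteq\mathbb{R}^n$ be open, let $f,g\in\mathbb{A}(\Omega)$ be D-continuous, and let $D$ be a dense subset of $\Omega$. Then: (a) if $f(x)\le g(x)$ for all $x\in D$, then $f(x)\le g(x)$ for all $x\in\Omega$; (b) if $f(x)=g(x)$ for all $x\in D$, then $f(x)=g(x)$ for all $x\in\Omega$; (c) if $f(x)\subseteq g(x)$ for all $x\in D$, then $f(x)\subseteq g(x)$ for all $x\in\Omega$.
   Context: $\overline{\mathbb{R}}=\mathbb{R}\cup\{\pm\infty\}$, $\mathbb{I}\overline{\mathbb{R}}$ is the set of closed intervals $[\underline a,\overline a]$ with $\underline a\le\overline a$ in $\overline{\mathbb{R}}$, $a\in\overline{\mathbb{R}}$ identified with $[a,a]$. $\mathbb{A}(X)$ is the set of functions $X\to\mathbb{I}\overline{\mathbb{R}}$. Order: $[\underline a,\overline a]\le[\underline b,\overline b]$ iff $\underline a\le\underline b$ and $\overline a\le\overline b$. $B_\delta(x)=\{y\in\Omega:\|x-y\|<\delta\}$. For dense $D\subseteq\Omega$ and $f\in\mathbb{A}(D)$: $I(D,\Omega,f)(x)=\sup_{\delta>0}\inf\{z\in f(y):y\in B_\delta(x)\cap D\}$, $S(D,\Omega,f)(x)=\inf_{\delta>0}\sup\{z\in f(y):y\in B_\delta(x)\cap D\}$, $F(D,\Omega,f)(x)=[I(D,\Omega,f)(x),S(D,\Omega,f)(x)]$. $f\in\mathbb{A}(\Omega)$ is D-continuous if $F(D,\Omega,f)=f$ for every dense subset $D$ of $\Omega$ (using the restriction of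 $f$ to $D$). *)

theory Defs
  imports "HOL-Analysis.Analysis" "HOL-Library.Extended_Real"
begin

text \<open>An element of the interval set IR-bar is represented as a pair (lo, hi) of extended
reals with lo \<le> hi; a real a is identified with (a, a).\<close>
type_synonym ival = "ereal \<times> ereal"

definition is_ival :: "ival \<Rightarrow> bool" where
  "is_ival a \<longleftrightarrow> fst a \<le> snd a"

definition ival_set :: "ival \<Rightarrow> ereal set" where
  "ival_set a = {z. fst a \<le> z \<and> z \<le> snd a}"

definition ival_le :: "ival \<Rightarrow> ival \<Rightarrow> bool" where
  "ival_le a b \<longleftrightarrow> fst a \<le> fst b \<and> snd a \<le> snd b"

definition in_A :: "'a set \<Rightarrow> ('a \<Rightarrow> ival) \<Rightarrow> bool" where
  "in_A X f \<longleftrightarrow> (\<forall>x\<in>X. is_ival (f x))"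

definition Bdelta :: "('a::metric_space) set \<Rightarrow> real \<Rightarrow> 'a \<Rightarrow> 'a set" where
  "Bdelta \<Omega> \<delta> x = {y\<in>\<Omega>. dist x y < \<delta>}"

definition dense_in :: "('a::topological_space) set \<Rightarrow> 'a set \<Rightarrow> bool" where
  "dense_in D \<Omega> \<longleftrightarrow> D \<subseteq> \<Omega> \<and> \<Omega> \<subseteq> closure D"

definition Ifun :: "('a::metric_space) set \<Rightarrow> 'a set \<Rightarrow> ('a \<Rightarrow> ival) \<Rightarrow> 'a \<Rightarrow> ereal" where
  "Ifun D \<Omega> f x = (SUP \<delta>\<in>{0<..}. Inf {z. \<exists>y\<in>Bdelta \<Omega> \<delta> x \<inter> D. z \<in> ival_set (f y)})"

definition Sfun :: "('a::metric_space) set \<Rightarrow> 'a set \<Rightarrow> ('a \<Rightarrow> ival) \<Rightarrow> 'a \<Rightarrow> ereal" where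
  "Sfun D \<Omega> f x = (INF \<delta>\<in>{0<..}. Sup {z. \<exists>y\<in>Bdelta \<Omega> \<delta> x \<inter> D. z \<in> ival_set (f y)})"

definition Ffun :: "('a::metric_space) set \<Rightarrow> 'a set \<Rightarrow> ('a \<Rightarrow> ival) \<Rightarrow> 'a \<Rightarrow> ival" where
  "Ffun D \<Omega> f x = (Ifun D \<Omega> f x, Sfun D \<Omega> f x)"

text \<open>D-continuity of f in A(Omega): F(D,Omega,f|D) = f on Omega for every dense D.
 Ffun only evaluates f on D, so passing f is the same as passing its restriction.\<close>
definition D_continuous :: "('a::metric_space) set \<Rightarrow> ('a \<Rightarrow> ival) \<Rightarrow> bool" where
  "D_continuous \<Omega> f \<longleftrightarrow> in_A \<Omega> f \<and>
     (\<forall>D. dense_in D \<Omega> \<longrightarrow> (\<forall>x\<in>\<Omega>. Ffun D \<Omega> f x = f x))"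

end

theory Submission
  imports Defs
begin

definition Sset :: "('a::metric_space) set \<Rightarrow> 'a set \<Rightarrow> ('a \<Rightarrow> ival) \<Rightarrow> 'a \<Rightarrow> real \<Rightarrow> ereal set" where
  "Sset D \<Omega> f x \<delta> = {z. \<exists>y\<in>Bdelta \<Omega> \<delta> x \<inter> D. z \<in> ival_set (f y)}"

lemma I_mono:
  assumes "\<And>\<delta>. Inf (Sset D \<Omega> f x \<delta>) \<le> Inf (Sset D \<Omega> g x \<delta>)"
  shows "Ifun D \<Omega> f x \<le> Ifun D \<Omega> g x"
  unfolding Ifun_def using assms[unfolded Sset_def] by (intro SUP_mono) auto

lemma S_mono:
  assumes "\<And>\<delta>. Sup (Sset D \<Omega> f x \<delta>) \<le> Sup (Sset D \<Omega> g x \<delta>)"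
  shows "Sfun D \<Omega> f x \<le> Sfun D \<Omega> g x"
  unfolding Sfun_def using assms[unfolded Sset_def] by (intro INF_mono) auto

lemma Inf_le_aux:
  assumes "\<forall>y\<in>D. ival_le (f y) (g y)" "\<forall>y\<in>D. is_ival (f y)"
  shows "Inf (Sset D \<Omega> f x \<delta>) \<le> Inf (Sset D \<Omega> g x \<delta>)"
proof (rule Inf_greatest)
  fix z assume "z \<in> Sset D \<Omega> g x \<delta>"
  then obtain y where y: "y \<in> Bdelta \<Omega> \<delta> x \<inter> D" "z \<in> ival_set (g y)" unfolding Sset_def by auto
  have "fst (f y) \<in> Sset D \<Omega> f x \<delta>" using y assms unfolding Sset_def ival_set_def is_ival_def by auto
  hence "Inf (Sset D \<Omega> f x \<delta>) \<le> fst (f y)" by (rule Inf_lower)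
  also have "\<dots> \<le> z" using y assms unfolding ival_set_def ival_le_def by force
  finally show "Inf (Sset D \<Omega> f x \<delta>) \<le> z" .
qed

lemma Sup_le_aux:
  assumes "\<forall>y\<in>D. ival_le (f y) (g y)" "\<forall>y\<in>D. is_ival (g y)"
  shows "Sup (Sset D \<Omega> f x \<delta>) \<le> Sup (Sset D \<Omega> g x \<delta>)"
proof (rule Sup_least)
  fix z assume "z \<in> Sset D \<Omega> f x \<delta>"
  then obtain y where y: "y \<in> Bdelta \<Omega> \<delta> x \<inter> D" "z \<in> ival_set (f y)" unfolding Sset_def by auto
  have "snd (g y) \<in> Sset D \<Omega> g x \<delta>" using y assms unfolding Sset_def ival_set_def is_ival_def by auto
  hence "snd (g y) \<le> Sup (Sset D \<Omega> g x \<delta>)" by (rule Sup_upper)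
  moreover have "z \<le> snd (g y)" using y assms unfolding ival_set_def ival_le_def by force
  ultimately show "z \<le> Sup (Sset D \<Omega> g x \<delta>)" by simp
qed

lemma Sset_sub:
  assumes "\<forall>y\<in>D. ival_set (f y) \<subseteq> ival_set (g y)"
  shows "Sset D \<Omega> f x \<delta> \<subseteq> Sset D \<Omega> g x \<delta>"
  using assms unfolding Sset_def by blast

theorem theorem14:
  fixes \<Omega> D :: "(real ^ 'n) set" and f g :: "real ^ 'n \<Rightarrow> ival"
  assumes "open \<Omega>"
    and "in_A \<Omega> f" and "in_A \<Omega> g"
    and "D_continuous \<Omega> f" and "D_continuous \<Omega> g"
    and "dense_in D \<Omega>"
  shows "((\<forall>x\<in>D. ival_le (f x) (g x)) \<longrightarrow> (\<forall>x\<in>\<Omega>. ival_le (f x) (g x)))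
    \<and> ((\<forall>x\<in>D. f x = g x) \<longrightarrow> (\<forall>x\<in>\<Omega>. f x = g x))
    \<and> ((\<forall>x\<in>D. ival_set (f x) \<subseteq> ival_set (g x)) \<longrightarrow> (\<forall>x\<in>\<Omega>. ival_set (f x) \<subseteq> ival_set (g x)))"
proof -
  have DO: "D \<subseteq> \<Omega>" using assms(6) unfolding dense_in_def by auto
  have fi: "\<forall>y\<in>D. is_ival (f y)" and gi: "\<forall>y\<in>D. is_ival (g y)"
    using assms(2,3) DO unfolding in_A_def by auto
  have fF: "\<And>x. x \<in> \<Omega> \<Longrightarrow> f x = (Ifun D \<Omega> f x, Sfun D \<Omega> f x)"
    using assms(4,6) unfolding D_continuous_def Ffun_def by metis
  have gF: "\<And>x. x \<in> \<Omega> \<Longrightarrow> g x = (Ifun D \<Omega> g x, Sfun D \<Omega> g x)"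
    using assms(5,6) unfolding D_continuous_def Ffun_def by metis
  have A: "\<forall>x\<in>\<Omega>. ival_le (f x) (g x)" if h: "\<forall>x\<in>D. ival_le (f x) (g x)"
  proof
    fix x assume x: "x \<in> \<Omega>"
    have "Ifun D \<Omega> f x \<le> Ifun D \<Omega> g x" by (rule I_mono, rule Inf_le_aux[OF h fi])
    moreover have "Sfun D \<Omega> f x \<le> Sfun D \<Omega> g x" by (rule S_mono, rule Sup_le_aux[OF h gi])
    ultimately show "ival_le (f x) (g x)" using fF[OF x] gF[OF x] unfolding ival_le_def
      by (metis fst_conv snd_conv)
  qed
  have B: "\<forall>x\<in>\<Omega>. f x = g x" if h: "\<forall>x\<in>D. f x = g x"
  proof
    fix x assume x: "x \<in> \<Omega>"
    have "Sset D \<Omega> f x = Sset D \<Omega> g x" using h unfolding Sset_def by (intro ext) auto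
    hence "Ifun D \<Omega> f x = Ifun D \<Omega> g x" "Sfun D \<Omega> f x = Sfun D \<Omega> g x"
      unfolding Ifun_def Sfun_def Sset_def by (metis)+
    thus "f x = g x" using fF[OF x] gF[OF x] by simp
  qed
  have C: "\<forall>x\<in>\<Omega>. ival_set (f x) \<subseteq> ival_set (g x)" if h: "\<forall>x\<in>D. ival_set (f x) \<subseteq> ival_set (g x)"
  proof
    fix x assume x: "x \<in> \<Omega>"
    have "Ifun D \<Omega> g x \<le> Ifun D \<Omega> f x" by (rule I_mono, rule Inf_superset_mono, rule Sset_sub[OF h])
    moreover have "Sfun D \<Omega> f x \<le> Sfun D \<Omega> g x" by (rule S_mono, rule Sup_subset_mono, rule Sset_sub[OF h])
    ultimately show "ival_set (f x) \<subseteq> ival_set (g x)" using fF[OF x] gF[OF x] unfolding ival_set_def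
      by (smt (verit, del_insts) Collect_mono fst_conv order_trans snd_conv)
  qed
  show ?thesis using A B C by blast
qed

end
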